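(* Let $q=p^r$ with $p$ prime, $\theta(a)=a^{p^s}$ with $1\le s\le r-1$. Let $g(t)\in\mathbb{F}_q[t;\theta]$ have degree $k$ and be a right divisor of some monic polynomial of degree $n$ in $\mathbb{F}_q[t;\theta]$, and let $\mathscr{C}\subseteq\mathbb{F}_q^n$ be the skew $\theta$-module code generated by $g$, i.e. $\mathscr{C}=\{w\in\mathbb{F}_q[t;\theta]:\deg w<n,\ w=a(t)g(t)\text{ for some }a\}$. Let $\omega$ be a generator of $\mathbb{F}_{q^{[k]_s}}^*$. Suppose $$k\ge\log_{p^s}\Big[1+\Big(\frac{p^s-1}{r}\Big)\log_p\Big(\frac{(p^s)^n+p^s-2}{p^s-1}\Big)\Big],$$ and suppose there exist an integer $l\ge0$, an integer $c$ with $\gcd(c,q^{[k]_s}-1)=1$, and an integer $\Delta\ge2$ such that $g^{[]_s}(\omega^{l+ci})=0$ for $i=0,\dots,\Delta-2$. Then $d(\mathscr{C})\ge\Delta$.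
   Context: $\mathbb{F}_q[t;\theta]$ is the skew polynomial ring with $ta=\theta(a)t$; polynomials of degree $<n$ are identified with coefficient vectors in $\mathbb{F}_q^n$ and $d(\mathscr{C})$ is the minimum Hamming distance. For $i\ge0$, $[i]_s=\frac{(p^s)^i-1}{p^s-1}$. For $g(t)=\sum_ia_it^i$, $g^{[]_s}(x)=\sum_ia_ix^{[i]_s}\in\mathbb{F}_q[x]$ (commutative polynomial ring), evaluated at elements of the extension field $\mathbb{F}_{q^{[k]_s}}$. *)

theory Defs
  imports "HOL-Computational_Algebra.Polynomial" "HOL-Library.Extended_Nat" Complex_Main
begin

definition frob :: "nat \<Rightarrow> nat \<Rightarrow> 'a::field \<Rightarrow> 'a" where
  "frob p s a = a ^ (p ^ s)"

text \<open>Multiplication in the skew polynomial ring F[t;theta], with t a = theta(a) t,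
  polynomials represented by their coefficient sequences:
  (sum_i a_i t^i)(sum_j b_j t^j) = sum_{i,j} a_i theta^i(b_j) t^(i+j).\<close>
definition skew_mult :: "('a::field \<Rightarrow> 'a) \<Rightarrow> 'a poly \<Rightarrow> 'a poly \<Rightarrow> 'a poly" where
  "skew_mult \<theta> f g = (\<Sum>i\<le>degree f. monom (coeff f i) i * map_poly (\<theta> ^^ i) g)"

definition qbr :: "nat \<Rightarrow> nat \<Rightarrow> nat \<Rightarrow> nat" where
  "qbr p s i = ((p ^ s) ^ i - 1) div (p ^ s - 1)"

text \<open>The linearized (commutative) polynomial g^{[]_s}, with coefficients mapped into
  an extension field via the embedding phi, evaluated at x.\<close>
definition lin_eval :: "('a::field \<Rightarrow> 'b::field) \<Rightarrow> nat \<Rightarrow> nat \<Rightarrow> 'a poly \<Rightarrow> 'b \<Rightarrow> 'b" where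
  "lin_eval \<phi> p s g x = (\<Sum>i\<le>degree g. \<phi> (coeff g i) * x ^ qbr p s i)"

definition skew_code :: "('a::field \<Rightarrow> 'a) \<Rightarrow> nat \<Rightarrow> 'a poly \<Rightarrow> 'a poly set" where
  "skew_code \<theta> n g = {w. degree w < n \<and> (\<exists>a. w = skew_mult \<theta> a g)}"

definition hamming_dist :: "nat \<Rightarrow> 'a::zero poly \<Rightarrow> 'a poly \<Rightarrow> nat" where
  "hamming_dist n u v = card {i. i < n \<and> coeff u i \<noteq> coeff v i}"

text \<open>Minimum Hamming distance (infinity if fewer than two codewords).\<close>
definition min_dist :: "nat \<Rightarrow> 'a::zero poly set \<Rightarrow> enat" where
  "min_dist n C = (INF uv \<in> {(u, v). u \<in> C \<and> v \<in> C \<and> u \<noteq> v}. enat (hamming_dist n (fst uv) (snd uv)))"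

end

theory Submission imports Defs "HOL-Number_Theory.Residues" begin
hide_const (open) UnivPoly.coeff UnivPoly.monom

lemma CHAR_eq_p:
  assumes "prime p" "card (UNIV :: 'b::{field,finite} set) = p ^ N" "N > 0"
  shows "CHAR('b) = p"
proof -
  have pos: "CHAR('b) > 0" by (rule finite_imp_CHAR_pos) simp
  have pr: "prime CHAR('b)" using prime_CHAR_semidom[OF pos] .
  have "CHAR('b) dvd p ^ N" using CHAR_dvd_CARD[where 'a='b] assms(2) by simp
  hence "CHAR('b) dvd p" by (rule prime_dvd_power[OF pr])
  thus ?thesis by (rule primes_dvd_imp_eq[OF pr assms(1)])
qed

lemma geom_nat: "(\<Sum>m<i. (Suc Q)^m) * Q + 1 = (Suc Q) ^ i"
proof (induction i)
  case (Suc i)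
  have "(\<Sum>m<Suc i. (Suc Q)^m) * Q + 1 = ((\<Sum>m<i. (Suc Q)^m) * Q + 1) + (Suc Q)^i * Q"
    by (simp add: distrib_right)
  also have "\<dots> = (Suc Q)^i + (Suc Q)^i * Q" by (simp only: Suc.IH)
  also have "\<dots> = (Suc Q)^Suc i" by simp
  finally show ?case .
qed simp

lemma qbr_eq: assumes "p ^ s \<ge> (2::nat)" shows "qbr p s i = (\<Sum>m<i. (p^s)^m)"
proof -
  define Q where "Q = p^s - 1"
  have Q: "p^s = Suc Q" "Q > 0" using assms unfolding Q_def by linarith+
  have e: "qbr p s i = ((p^s)^i - 1) div (p^s - 1)" by (simp only: qbr_def)
  have "(Suc Q)^i - 1 = (\<Sum>m<i. (Suc Q)^m) * Q" using geom_nat[of Q i] by linarith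
  hence "qbr p s i = ((\<Sum>m<i. (Suc Q)^m) * Q) div Q" unfolding e Q(1) by simp
  also have "\<dots> = (\<Sum>m<i. (Suc Q)^m)" using Q(2) by simp
  finally show ?thesis unfolding Q(1) .
qed

lemma qbr_add: assumes "p ^ s \<ge> (2::nat)" shows "qbr p s (i + j) = qbr p s i + (p^s)^i * qbr p s j"
proof (induction j)
  case (Suc j)
  have 1: "qbr p s (i + Suc j) = qbr p s (i+j) + (p^s)^(i+j)" using assms by (simp add: qbr_eq)
  have 2: "qbr p s (Suc j) = qbr p s j + (p^s)^j" using assms by (simp add: qbr_eq)
  have "qbr p s (i + Suc j) = qbr p s i + (p^s)^i * qbr p s j + (p^s)^i * (p^s)^j"
    using 1 Suc.IH by (simp add: power_add)
  thus ?case using 2 by (simp add: distrib_left)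
next
  case 0
  show ?case using assms by (simp add: qbr_eq)
qed

lemma qbr_mono: assumes "p ^ s \<ge> (2::nat)" "i < i'" shows "qbr p s i < qbr p s i'"
proof -
  from less_imp_Suc_add[OF assms(2)] obtain d where d: "i' = i + Suc d" by (elim exE) simp
  have e: "qbr p s i' = qbr p s i + (p^s)^i * qbr p s (Suc d)"
    unfolding d by (rule qbr_add[OF assms(1)])
  have P: "p^s > (0::nat)" using assms(1) by linarith
  have "qbr p s (Suc d) = qbr p s d + (p^s)^d" using assms by (simp add: qbr_eq)
  hence "qbr p s (Suc d) > 0" using zero_less_power[OF P, of d] by linarith
  moreover have "(p^s)^i > 0" by (rule zero_less_power[OF P])
  ultimately show ?thesis unfolding e by simp
qed

lemma funpow_frob: "(frob p s ^^ i) x = x ^ (p^(s*i))"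
proof (induction i)
  case (Suc i)
  have "(frob p s ^^ Suc i) x = ((frob p s ^^ i) x) ^ (p^s)" by (simp add: frob_def)
  also have "\<dots> = x ^ (p^(s*i) * p^s)" using Suc by (simp add: power_mult)
  also have "p^(s*i) * p^s = p^(s * Suc i)" by (simp add: power_add mult.commute)
  finally show ?case .
qed simp

lemma sum_split_lt: "(\<Sum>m<i + (D::nat). f m) = (\<Sum>m<i. f m) + (\<Sum>j<D. f (i + j))"
  by (induction D) (simp_all add: add.assoc)
context
  fixes \<phi> :: "'a::field \<Rightarrow> 'b::field"
  assumes hadd: "\<And>x y. \<phi> (x + y) = \<phi> x + \<phi> y" and hmult: "\<And>x y. \<phi> (x * y) = \<phi> x * \<phi> y"
    and hone: "\<phi> 1 = 1"
begin

lemma phi0: "\<phi> 0 = 0"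
proof -
  have "\<phi> 0 + \<phi> 0 = \<phi> 0 + 0" using hadd[of 0 0] by simp
  thus ?thesis by (rule add_left_imp_eq)
qed

lemma phi_diff: "\<phi> (x - y) = \<phi> x - \<phi> y"
  using hadd[of "x - y" y] by (simp add: algebra_simps)

lemma phi_pow: "\<phi> (x ^ n) = \<phi> x ^ n"
  by (induction n) (simp_all add: hone hmult)

lemma phi_nz: "x \<noteq> 0 \<Longrightarrow> \<phi> x \<noteq> 0"
  using hmult[of x "inverse x"] hone by auto

lemma lin_eval_bound:
  assumes "degree f < M"
  shows "lin_eval \<phi> p s f x = (\<Sum>i<M. \<phi> (coeff f i) * x ^ qbr p s i)"
  unfolding lin_eval_def
  by (rule sum.mono_neutral_left) (use assms in \<open>auto simp: coeff_eq_0 phi0\<close>)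

lemma lin_eval_zero: "lin_eval \<phi> p s 0 x = 0"
  by (simp add: lin_eval_def phi0)

lemma lin_eval_add: "lin_eval \<phi> p s (f + h) x = lin_eval \<phi> p s f x + lin_eval \<phi> p s h x"
proof -
  define M where "M = Suc (max (degree f) (degree h))"
  have "degree (f + h) < M" using degree_add_le_max[of f h] unfolding M_def by linarith
  moreover have "degree f < M" "degree h < M" unfolding M_def by auto
  ultimately show ?thesis
    by (simp add: lin_eval_bound hadd sum.distrib distrib_right)
qed

lemma lin_eval_diff: "lin_eval \<phi> p s (f - h) x = lin_eval \<phi> p s f x - lin_eval \<phi> p s h x"
  using lin_eval_add[where f="f - h" and h=h] by simp

lemma lin_eval_sum: "lin_eval \<phi> p s (\<Sum>i\<in>A. F i) x = (\<Sum>i\<in>A. lin_eval \<phi> p s (F i) x)"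
  by (induction A rule: infinite_finite_induct) (simp_all add: lin_eval_zero lin_eval_add)

lemma lin_eval_term:
  assumes "prime CHAR('b)" "p = CHAR('b)" "p ^ s \<ge> 2"
  shows "lin_eval \<phi> p s (monom c i * map_poly (frob p s ^^ i) g) \<beta>
       = \<phi> c * \<beta> ^ qbr p s i * (lin_eval \<phi> p s g \<beta>) ^ (p^(s*i))"
proof -
  define D where "D = Suc (degree g)"
  define e where "e = p^(s*i)"
  have z: "(frob p s ^^ i) 0 = 0" using assms by (simp add: funpow_frob prime_gt_0_nat)
  have cm: "\<And>j. coeff (map_poly (frob p s ^^ i) g) j = (coeff g j)^(p^(s*i))"
    by (subst coeff_map_poly[where f="frob p s ^^ i", OF z]) (simp add: funpow_frob)
  have deg: "degree (monom c i * map_poly (frob p s ^^ i) g) < i + D"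
  proof -
    have "degree (monom c i * map_poly (frob p s ^^ i) g) \<le> degree (monom c i :: 'a poly) + degree (map_poly (frob p s ^^ i) g)"
      by (rule degree_mult_le)
    also have "\<dots> \<le> i + degree g" using degree_monom_le map_poly_degree_leq add_mono by blast
    finally show ?thesis unfolding D_def by simp
  qed
  have "lin_eval \<phi> p s (monom c i * map_poly (frob p s ^^ i) g) \<beta>
     = (\<Sum>m<i + D. \<phi> (coeff (monom c i * map_poly (frob p s ^^ i) g) m) * \<beta> ^ qbr p s m)"
    by (rule lin_eval_bound[OF deg])
  also have "\<dots> = (\<Sum>j<D. \<phi> (coeff (monom c i * map_poly (frob p s ^^ i) g) (i + j)) * \<beta> ^ qbr p s (i + j))"
    by (simp add: sum_split_lt coeff_monom_mult phi0)
  also have "\<dots> = (\<Sum>j<D. \<phi> c * \<beta> ^ qbr p s i * (\<phi> (coeff g j) * \<beta> ^ qbr p s j) ^ e)"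
    by (rule sum.cong) (simp_all add: coeff_monom_mult cm hmult phi_pow
          qbr_add[OF assms(3)] power_add power_mult_distrib e_def power_mult[symmetric] mult_ac)
  also have "\<dots> = \<phi> c * \<beta> ^ qbr p s i * (\<Sum>j<D. (\<phi> (coeff g j) * \<beta> ^ qbr p s j) ^ e)"
    by (simp add: sum_distrib_left)
  also have "(\<Sum>j<D. (\<phi> (coeff g j) * \<beta> ^ qbr p s j) ^ e) = (\<Sum>j<D. \<phi> (coeff g j) * \<beta> ^ qbr p s j) ^ e"
    by (rule freshmans_dream_sum'[symmetric, where n="s*i"]) (use assms in \<open>simp_all add: e_def\<close>)
  also have "(\<Sum>j<D. \<phi> (coeff g j) * \<beta> ^ qbr p s j) = lin_eval \<phi> p s g \<beta>"
    by (rule lin_eval_bound[symmetric]) (simp add: D_def)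
  finally show ?thesis by (simp add: e_def)
qed

lemma lin_eval_skew:
  assumes "prime CHAR('b)" "p = CHAR('b)" "p ^ s \<ge> 2" "lin_eval \<phi> p s g \<beta> = 0"
  shows "lin_eval \<phi> p s (skew_mult (frob p s) a g) \<beta> = 0"
  unfolding skew_mult_def lin_eval_sum
  using assms prime_gt_0_nat[OF assms(1)] by (simp add: lin_eval_term power_0_left)

end


lemma qbr_real: assumes "p ^ s \<ge> (2::nat)"
  shows "real (qbr p s m) * (real p ^ s - 1) + 1 = (real p ^ s) ^ m"
proof -
  define Q where "Q = p^s - 1"
  have Q: "p^s = Suc Q" using assms unfolding Q_def by linarith
  have "qbr p s m * Q + 1 = (Suc Q)^m" using geom_nat[of Q m] qbr_eq[OF assms, of m] Q by simp
  hence "real (qbr p s m * Q + 1) = real ((Suc Q)^m)" by simp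
  hence "real (qbr p s m) * real Q + 1 = (real (Suc Q))^m" by simp
  moreover have "real p ^ s = real (Suc Q)" using Q by (metis of_nat_power)
  ultimately show ?thesis by simp
qed

lemma real_bound:
  fixes p r s n K :: nat
  assumes "prime p" "s \<ge> 1" "r \<ge> 1"
   and hK: "real K \<ge> log (real p ^ s) (1 + ((real p ^ s - 1) / real r) *
                log (real p) (((real p ^ s) ^ n + real p ^ s - 2) / (real p ^ s - 1)))"
  shows "qbr p s n + 1 \<le> (p ^ r) ^ qbr p s K"
proof -
  have p2: "p \<ge> 2" using assms(1) prime_ge_2_nat by blast
  have "p ^ 1 \<le> p ^ s" by (rule power_increasing) (use assms p2 in auto)
  hence ps2: "p ^ s \<ge> 2" using p2 by simp
  define P where "P = real p ^ s"
  have P2: "P \<ge> 2" unfolding P_def using ps2 by (metis of_nat_le_iff of_nat_numeral of_nat_power)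
  define A where "A = ((P ^ n + P - 2) / (P - 1))"
  define B where "B = real (qbr p s K)"
  have A: "A = real (qbr p s n) + 1"
  proof -
    have "real (qbr p s n) * (P - 1) + 1 = P ^ n" using qbr_real[OF ps2] unfolding P_def by simp
    hence "P ^ n + P - 2 = (real (qbr p s n) + 1) * (P - 1)" by (simp add: algebra_simps)
    thus ?thesis unfolding A_def using P2 by simp
  qed
  have PK: "P ^ K = B * (P - 1) + 1" using qbr_real[OF ps2] unfolding P_def B_def by simp
  have A1: "A \<ge> 1" unfolding A by simp
  have lA: "log (real p) A \<ge> 0" using A1 p2 by simp
  define X where "X = 1 + ((P - 1) / real r) * log (real p) A"
  have "((P - 1) / real r) * log (real p) A \<ge> 0" using P2 lA by (intro mult_nonneg_nonneg divide_nonneg_nonneg) auto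
  hence X0: "X > 0" unfolding X_def by linarith
  have "log P X \<le> real K" using hK unfolding X_def A_def P_def by simp
  hence "X \<le> P powr real K" using log_le_iff[of P X] P2 X0 by simp
  also have "\<dots> = P ^ K" using P2 by (simp add: powr_realpow)
  finally have "((P - 1) / real r) * log (real p) A \<le> B * (P - 1)" unfolding X_def PK by simp
  hence "(P - 1) * log (real p) A \<le> (P - 1) * (real r * B)" using assms(3) P2
    by (simp add: field_simps)
  hence "log (real p) A \<le> real r * B" using P2 by simp
  hence "A \<le> real p powr (real r * B)" using log_le_iff[of "real p" A] p2 A1 by simp
  also have "real r * B = real (r * qbr p s K)" unfolding B_def by simp
  also have "real p powr real (r * qbr p s K) = real p ^ (r * qbr p s K)" by (rule powr_realpow) (use p2 in simp)
  finally have "real (qbr p s n) + 1 \<le> real ((p ^ r) ^ qbr p s K)" unfolding A by (simp add: power_mult)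
  thus ?thesis by linarith
qed

lemma vander:
  fixes x y :: "nat \<Rightarrow> 'b::field"
  assumes fin: "finite S" and kS: "k \<in> S" and inj: "inj_on x S" and yk: "y k \<noteq> 0"
    and eqs: "\<And>j. j < card S \<Longrightarrow> (\<Sum>i\<in>S. y i * x i ^ j) = 0"
  shows False
proof -
  define P where "P = (\<Prod>i\<in>S - {k}. [:- x i, 1:])"
  have "degree P \<le> sum (degree \<circ> (\<lambda>i. [:- x i, 1:])) (S - {k})"
    unfolding P_def by (rule degree_prod_sum_le) (use fin in simp)
  also have "\<dots> = card (S - {k})" by simp
  also have "\<dots> < card S" using fin kS by (meson card_Diff1_less)
  finally have degP: "degree P < card S" .
  have "(\<Sum>i\<in>S. y i * poly P (x i)) = (\<Sum>i\<in>S. \<Sum>j\<le>degree P. coeff P j * (y i * x i ^ j))"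
    by (simp add: poly_altdef sum_distrib_left mult_ac)
  also have "\<dots> = (\<Sum>j\<le>degree P. coeff P j * (\<Sum>i\<in>S. y i * x i ^ j))"
    by (subst sum.swap) (simp add: sum_distrib_left)
  also have "\<dots> = 0" using degP by (simp add: eqs)
  finally have z: "(\<Sum>i\<in>S. y i * poly P (x i)) = 0" .
  have "(\<Sum>i\<in>S. y i * poly P (x i)) = y k * poly P (x k) + (\<Sum>i\<in>S - {k}. y i * poly P (x i))"
    using fin kS by (simp add: sum.remove)
  also have "(\<Sum>i\<in>S - {k}. y i * poly P (x i)) = 0"
  proof (rule sum.neutral, rule ballI)
    fix i assume i: "i \<in> S - {k}"
    have "poly P (x i) = (\<Prod>i'\<in>S - {k}. x i - x i')" unfolding P_def poly_prod by simp
    also have "\<dots> = 0" using fin i by (intro prod_zero) auto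
    finally show "y i * poly P (x i) = 0" by simp
  qed
  finally have "y k * poly P (x k) = 0" using z by simp
  moreover have "poly P (x k) \<noteq> 0"
  proof -
    have "poly P (x k) = (\<Prod>i'\<in>S - {k}. x k - x i')" unfolding P_def poly_prod by simp
    also have "\<dots> \<noteq> 0"
    proof
      assume "(\<Prod>i'\<in>S - {k}. x k - x i') = 0"
      then obtain i' where "i' \<in> S - {k}" "x k - x i' = 0" using fin by auto
      thus False using inj kS unfolding inj_on_def by auto
    qed
    finally show ?thesis .
  qed
  ultimately show False using yk by simp
qed



lemma gen_order:
  fixes \<omega> :: "'b::{field,finite}"
  assumes w0: "\<omega> \<noteq> 0" and gen: "\<forall>x::'b. x \<noteq> 0 \<longrightarrow> (\<exists>j::nat. x = \<omega> ^ j)"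
  shows "\<omega> ^ j = 1 \<longleftrightarrow> (card (UNIV::'b set) - 1) dvd j"
proof -
  have cancel: "\<omega> ^ (b - a) = 1" if "a < b" "\<omega> ^ a = \<omega> ^ b" for a b
  proof -
    have "\<omega> ^ a * \<omega> ^ (b - a) = \<omega> ^ (a + (b - a))" by (simp only: power_add)
    also have "a + (b - a) = b" using that by simp
    finally have "\<omega> ^ a * \<omega> ^ (b - a) = \<omega> ^ a * 1" using that by simp
    thus ?thesis using w0 by simp
  qed
  have "\<not> inj_on (\<lambda>j. \<omega>^j) {..card (UNIV::'b set)}"
  proof
    assume "inj_on (\<lambda>j. \<omega>^j) {..card (UNIV::'b set)}"
    hence "card ((\<lambda>j. \<omega>^j) ` {..card (UNIV::'b set)}) = Suc (card (UNIV::'b set))"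
      by (simp add: card_image)
    moreover have "card ((\<lambda>j. \<omega>^j) ` {..card (UNIV::'b set)}) \<le> card (UNIV::'b set)"
      by (rule card_mono) auto
    ultimately show False by simp
  qed
  then obtain a b where ab: "a \<noteq> b" "\<omega>^a = \<omega>^b" unfolding inj_on_def by auto
  have ex: "\<exists>d. 0 < d \<and> \<omega>^d = 1"
  proof (cases "a < b")
    case True
    then show ?thesis using cancel[OF True ab(2)] by (intro exI[of _ "b - a"]) simp
  next
    case False
    hence "b < a" using ab(1) by simp
    then show ?thesis using cancel[OF \<open>b < a\<close> ab(2)[symmetric]] by (intro exI[of _ "a - b"]) simp
  qed
  define d where "d = (LEAST d. 0 < d \<and> \<omega>^d = 1)"
  have d: "0 < d \<and> \<omega>^d = 1" unfolding d_def using ex by (rule LeastI_ex)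
  have dmin: "\<omega>^e \<noteq> 1" if "0 < e" "e < d" for e
    using not_less_Least[of e "\<lambda>d. 0 < d \<and> \<omega>^d = 1"] that unfolding d_def by blast
  have pm: "\<omega>^j = \<omega>^(j mod d)" for j
  proof -
    have "\<omega>^j = \<omega>^(d * (j div d) + j mod d)" by simp
    also have "\<dots> = (\<omega>^d)^(j div d) * \<omega>^(j mod d)" by (simp only: power_add power_mult)
    finally show ?thesis using d by simp
  qed
  have iff: "\<omega>^j = 1 \<longleftrightarrow> d dvd j" for j
  proof
    assume "\<omega>^j = 1"
    hence "\<omega>^(j mod d) = 1" using pm by simp
    hence "j mod d = 0" using dmin[of "j mod d"] d by (cases "j mod d = 0") auto
    thus "d dvd j" by (simp add: mod_eq_0_iff_dvd)
  next
    assume "d dvd j"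
    then obtain m where "j = d * m" by (elim dvdE)
    thus "\<omega>^j = 1" using d by (simp add: power_mult)
  qed
  have inj: "inj_on (\<lambda>j. \<omega>^j) {..<d}"
  proof (rule inj_onI)
    fix a b assume a: "a \<in> {..<d}" and b: "b \<in> {..<d}" and e: "\<omega>^a = \<omega>^b"
    show "a = b"
    proof (rule ccontr)
      assume "a \<noteq> b"
      show False
      proof (cases "a < b")
        case True
        thus False using cancel[OF True e] dmin[of "b - a"] b by (simp add: less_imp_diff_less)
      next
        case False
        hence "b < a" using \<open>a \<noteq> b\<close> by simp
        thus False using cancel[OF \<open>b < a\<close> e[symmetric]] dmin[of "a - b"] a by (simp add: less_imp_diff_less)
      qed
    qed
  qed
  have img: "(\<lambda>j. \<omega>^j) ` {..<d} = UNIV - {0}"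
  proof
    show "(\<lambda>j. \<omega>^j) ` {..<d} \<subseteq> UNIV - {0}" using w0 by auto
  next
    show "UNIV - {0} \<subseteq> (\<lambda>j. \<omega>^j) ` {..<d}"
    proof
      fix x :: 'b assume "x \<in> UNIV - {0}"
      then obtain j where "x = \<omega>^j" using gen by auto
      hence "x = \<omega>^(j mod d)" using pm by simp
      moreover have "j mod d \<in> {..<d}" using d by simp
      ultimately show "x \<in> (\<lambda>j. \<omega>^j) ` {..<d}" by blast
    qed
  qed
  have "d = card (UNIV - {0::'b})" using card_image[OF inj] img by simp
  also have "\<dots> = card (UNIV::'b set) - 1" by (simp add: card_Diff_singleton)
  finally show ?thesis using iff by simp
qed

lemma powi_one:
  fixes \<omega> :: "'b::{field,finite}"
  assumes w0: "\<omega> \<noteq> 0" and gen: "\<forall>x::'b. x \<noteq> 0 \<longrightarrow> (\<exists>j::nat. x = \<omega> ^ j)"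
    and e: "\<omega> powi z = 1"
  shows "int (card (UNIV::'b set) - 1) dvd z"
proof (cases "z \<ge> 0")
  case True
  hence z: "z = int (nat z)" by simp
  have "\<omega> ^ nat z = \<omega> powi (int (nat z))" by (simp only: power_int_of_nat)
  also have "int (nat z) = z" using True by simp
  finally have "\<omega> ^ nat z = 1" using e by simp
  hence "(card (UNIV::'b set) - 1) dvd nat z" using gen_order[OF w0 gen] by simp
  hence "int (card (UNIV::'b set) - 1) dvd int (nat z)" unfolding int_dvd_int_iff .
  thus ?thesis using z by simp
next
  case False
  hence z: "z = - int (nat (- z))" by simp
  have "inverse (\<omega> ^ nat (- z)) = inverse (\<omega> powi (int (nat (- z))))" by (simp only: power_int_of_nat)
  also have "\<dots> = \<omega> powi (- int (nat (- z)))" by (simp only: power_int_minus)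
  also have "- int (nat (- z)) = z" using False by simp
  finally have "inverse (\<omega> ^ nat (- z)) = 1" using e by simp
  hence "\<omega> ^ nat (- z) = 1" by (simp add: inverse_eq_1_iff)
  hence "(card (UNIV::'b set) - 1) dvd nat (- z)" using gen_order[OF w0 gen] by simp
  hence "int (card (UNIV::'b set) - 1) dvd int (nat (- z))" unfolding int_dvd_int_iff .
  hence "int (card (UNIV::'b set) - 1) dvd - int (nat (- z))" by simp
  thus ?thesis using z by simp
qed

lemma distinct_x:
  fixes \<omega> :: "'b::{field,finite}"
  assumes w0: "\<omega> \<noteq> 0" and gen: "\<forall>x::'b. x \<noteq> 0 \<longrightarrow> (\<exists>j::nat. x = \<omega> ^ j)"
    and ps2: "p ^ s \<ge> (2::nat)" and bound: "qbr p s n \<le> card (UNIV::'b set) - 1"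
    and cop: "coprime c (int (card (UNIV::'b set) - 1))"
    and ii: "i < i'" "i' < n"
  shows "(\<omega> powi c) ^ qbr p s i \<noteq> (\<omega> powi c) ^ qbr p s i'"
proof
  define N where "N = card (UNIV::'b set) - 1"
  assume eq: "(\<omega> powi c) ^ qbr p s i = (\<omega> powi c) ^ qbr p s i'"
  hence "\<omega> powi (c * int (qbr p s i)) = \<omega> powi (c * int (qbr p s i'))"
    by (simp add: power_int_power')
  hence "\<omega> powi (c * int (qbr p s i') - c * int (qbr p s i)) = 1"
    using w0 by (simp add: power_int_diff power_int_not_zero)
  hence "int N dvd c * (int (qbr p s i') - int (qbr p s i))"
    using powi_one[OF w0 gen] unfolding N_def by (simp add: algebra_simps)
  moreover have "coprime (int N) c" using cop unfolding N_def by (simp add: coprime_commute)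
  ultimately have dv: "int N dvd (int (qbr p s i') - int (qbr p s i))"
    using coprime_dvd_mult_right_iff by blast
  have lt1: "qbr p s i < qbr p s i'" by (rule qbr_mono[OF ps2 ii(1)])
  have lt2: "qbr p s i' < qbr p s n" by (rule qbr_mono[OF ps2 ii(2)])
  have "int N \<le> int (qbr p s i') - int (qbr p s i)"
    using zdvd_imp_le[OF dv] lt1 by simp
  thus False using lt2 bound unfolding N_def by simp
qed

lemma powi_split:
  fixes \<omega> :: "'b::field"
  assumes w0: "\<omega> \<noteq> 0"
  shows "(\<omega> powi (a + c * int j)) ^ m = (\<omega> powi a) ^ m * ((\<omega> powi c) ^ m) ^ j"
proof -
  have "(\<omega> powi (a + c * int j)) ^ m = \<omega> powi ((a + c * int j) * int m)" by (rule power_int_power')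
  also have "\<dots> = \<omega> powi (a * int m + (c * int m) * int j)" by (simp add: algebra_simps)
  also have "\<dots> = \<omega> powi (a * int m) * \<omega> powi ((c * int m) * int j)" by (rule power_int_add) (simp add: w0)
  also have "\<dots> = (\<omega> powi a) ^ m * ((\<omega> powi c) ^ m) ^ j" by (simp add: power_int_power')
  finally show ?thesis .
qed



lemma core:
  fixes \<phi> :: "'a::field \<Rightarrow> 'b::{field,finite}" and \<omega> :: 'b and c :: int
  assumes hadd: "\<And>x y. \<phi> (x + y) = \<phi> x + \<phi> y" and hmult: "\<And>x y. \<phi> (x * y) = \<phi> x * \<phi> y"
    and hone: "\<phi> 1 = 1"
    and w0: "\<omega> \<noteq> 0" and gen: "\<forall>x::'b. x \<noteq> 0 \<longrightarrow> (\<exists>j::nat. x = \<omega> ^ j)"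
    and pc: "prime CHAR('b)" "p = CHAR('b)" and ps2: "p ^ s \<ge> 2"
    and bound: "qbr p s n \<le> card (UNIV::'b set) - 1"
    and cop: "coprime c (int (card (UNIV::'b set) - 1))"
    and roots: "\<forall>i. i \<le> \<Delta> - 2 \<longrightarrow> lin_eval \<phi> p s g (\<omega> powi (int l + c * int i)) = 0"
    and D2: "\<Delta> \<ge> 2"
    and u: "u \<in> skew_code (frob p s) n g" and v: "v \<in> skew_code (frob p s) n g" and uv: "u \<noteq> v"
  shows "\<Delta> \<le> hamming_dist n u v"
proof (rule ccontr)
  assume "\<not> \<Delta> \<le> hamming_dist n u v"
  hence lt: "hamming_dist n u v < \<Delta>" by simp
  define \<beta> where "\<beta> j = \<omega> powi (int l + c * int j)" for j :: nat
  define w where "w = u - v"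
  obtain a where a: "u = skew_mult (frob p s) a g" "degree u < n" using u unfolding skew_code_def by auto
  obtain b where b: "v = skew_mult (frob p s) b g" "degree v < n" using v unfolding skew_code_def by auto
  have wroot: "lin_eval \<phi> p s w (\<beta> j) = 0" if "j \<le> \<Delta> - 2" for j
  proof -
    have r: "lin_eval \<phi> p s g (\<beta> j) = 0" using roots that unfolding \<beta>_def by simp
    show ?thesis unfolding w_def lin_eval_diff[OF hadd hmult hone] a(1) b(1)
      using lin_eval_skew[OF hadd hmult hone pc ps2 r] by simp
  qed
  have degw: "degree w < n" unfolding w_def using degree_diff_le_max[of u v] a(2) b(2) by linarith
  have w0': "w \<noteq> 0" unfolding w_def using uv by simp
  define S where "S = {i. i < n \<and> coeff w i \<noteq> 0}"
  have hd: "hamming_dist n u v = card S"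
    unfolding hamming_dist_def S_def w_def by (simp add: coeff_diff)
  have finS: "finite S" unfolding S_def by simp
  have kS: "degree w \<in> S" unfolding S_def using degw w0' by simp
  define x where "x i = (\<omega> powi c) ^ qbr p s i" for i
  define y where "y i = \<phi> (coeff w i) * (\<omega> powi int l) ^ qbr p s i" for i
  have inj: "inj_on x S"
  proof (rule inj_onI)
    fix i i' assume i: "i \<in> S" and i': "i' \<in> S" and e: "x i = x i'"
    show "i = i'"
    proof (rule ccontr)
      assume ne: "i \<noteq> i'"
      have lt_n: "i < n" "i' < n" using i i' unfolding S_def by auto
      show False
      proof (cases "i < i'")
        case True
        thus False using distinct_x[OF w0 gen ps2 bound cop True lt_n(2)] e unfolding x_def by simp
      next
        case False
        hence "i' < i" using ne by simp
        thus False using distinct_x[OF w0 gen ps2 bound cop \<open>i' < i\<close> lt_n(1)] e unfolding x_def by simp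
      qed
    qed
  qed
  have yk: "y (degree w) \<noteq> 0"
    unfolding y_def using phi_nz[OF hadd hmult hone] kS w0 unfolding S_def
    by (simp add: power_int_not_zero)
  have eqs: "(\<Sum>i\<in>S. y i * x i ^ j) = 0" if j: "j < card S" for j
  proof -
    have jD: "j \<le> \<Delta> - 2" using j lt hd by simp
    have "(\<Sum>i\<in>S. y i * x i ^ j) = (\<Sum>i\<in>S. \<phi> (coeff w i) * (\<beta> j) ^ qbr p s i)"
      by (rule sum.cong) (simp_all add: x_def y_def \<beta>_def powi_split[OF w0] mult_ac)
    also have "\<dots> = (\<Sum>i<n. \<phi> (coeff w i) * (\<beta> j) ^ qbr p s i)"
      by (rule sum.mono_neutral_left) (auto simp: S_def phi0[OF hadd hmult hone])
    also have "\<dots> = lin_eval \<phi> p s w (\<beta> j)"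
      by (rule lin_eval_bound[OF hadd hmult hone degw, symmetric])
    also have "\<dots> = 0" by (rule wroot[OF jD])
    finally show ?thesis .
  qed
  show False by (rule vander[OF finS kS inj yk eqs])
qed


theorem mainTheorem11:
  fixes p r s n l :: nat and c :: int and \<Delta> :: nat
    and g :: "'a::{field,finite} poly"
    and \<phi> :: "'a \<Rightarrow> 'b::{field,finite}" and \<omega> :: 'b
  assumes "prime p" and "card (UNIV :: 'a set) = p ^ r"
    and "1 \<le> s" and "s \<le> r - 1"
    and "\<exists>h f. f = skew_mult (frob p s) h g \<and> lead_coeff f = 1 \<and> degree f = n"
    and "card (UNIV :: 'b set) = (p ^ r) ^ qbr p s (degree g)"
    and "\<And>x y. \<phi> (x + y) = \<phi> x + \<phi> y" and "\<And>x y. \<phi> (x * y) = \<phi> x * \<phi> y"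
    and "\<phi> 1 = 1"
    and "\<omega> \<noteq> 0" and "\<forall>x::'b. x \<noteq> 0 \<longrightarrow> (\<exists>j::nat. x = \<omega> ^ j)"
    and "real (degree g) \<ge> log (real p ^ s)
           (1 + ((real p ^ s - 1) / real r) *
                log (real p) (((real p ^ s) ^ n + real p ^ s - 2) / (real p ^ s - 1)))"
    and "gcd c (int ((p ^ r) ^ qbr p s (degree g)) - 1) = 1"
    and "\<Delta> \<ge> 2"
    and "\<forall>i. i \<le> \<Delta> - 2 \<longrightarrow> lin_eval \<phi> p s g (\<omega> powi (int l + c * int i)) = 0"
  shows "enat \<Delta> \<le> min_dist n (skew_code (frob p s) n g)"
proof -
  have p2: "p \<ge> 2" using assms(1) by (rule prime_ge_2_nat)
  have r1: "r \<ge> 1" using assms(3,4) by linarith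
  have "p ^ 1 \<le> p ^ s" by (rule power_increasing) (use assms(3) p2 in auto)
  hence ps2: "p ^ s \<ge> 2" using p2 by simp
  define K where "K = degree g"
  have "card {0::'b, 1} \<le> card (UNIV::'b set)" by (rule card_mono) auto
  hence cardb2: "card (UNIV::'b set) \<ge> 2" by simp
  have cardb: "card (UNIV::'b set) = p ^ (r * qbr p s K)" using assms(6) unfolding K_def by (simp add: power_mult)
  have qK: "qbr p s K > 0"
  proof (rule ccontr)
    assume "\<not> qbr p s K > 0"
    hence "qbr p s K = 0" by simp
    hence "card (UNIV::'b set) = 1" using cardb by simp
    thus False using cardb2 by simp
  qed
  have rq: "r * qbr p s K > 0" using qK r1 by simp
  have charp: "CHAR('b) = p" by (rule CHAR_eq_p[OF assms(1) cardb rq])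
  have pc: "prime CHAR('b)" using charp assms(1) by simp
  have bound0: "qbr p s n + 1 \<le> (p^r)^qbr p s K"
    by (rule real_bound[OF assms(1) assms(3) r1]) (use assms(12) in \<open>simp add: K_def\<close>)
  have bound: "qbr p s n \<le> card (UNIV::'b set) - 1" using bound0 assms(6) unfolding K_def by simp
  have "int (card (UNIV::'b set) - 1) = int ((p ^ r) ^ qbr p s (degree g)) - 1"
    using cardb2 assms(6) by (simp add: of_nat_diff)
  hence cop: "coprime c (int (card (UNIV::'b set) - 1))"
    using assms(13) by (simp add: gcd_eq_1_imp_coprime)
  show ?thesis unfolding min_dist_def
  proof (rule INF_greatest)
    fix uv assume "uv \<in> {(u, v). u \<in> skew_code (frob p s) n g \<and> v \<in> skew_code (frob p s) n g \<and> u \<noteq> v}"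
    then obtain u v where uv: "uv = (u, v)" "u \<in> skew_code (frob p s) n g" "v \<in> skew_code (frob p s) n g" "u \<noteq> v"
      by auto
    have "\<Delta> \<le> hamming_dist n u v"
      by (rule core[OF assms(7) assms(8) assms(9) assms(10) assms(11) pc charp[symmetric] ps2 bound cop assms(15) assms(14) uv(2) uv(3) uv(4)])
    thus "enat \<Delta> \<le> enat (hamming_dist n (fst uv) (snd uv))" using uv(1) by simp
  qed
qed

end
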